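(* Let $0<q<1$, $\alpha,\gamma\in\mathbb{C}$ with $q^\gamma\notin q^{\mathbb{Z}}$, and $z\in\mathbb{C}\setminus\{0\}$ (complex powers of $z$ taken with a fixed branch of $\log z$). For $n\in\mathbb{Z}$ put \begin{align*} \varphi_n&=(q^{n+\gamma};q)_\infty\,{}_1\phi_1(q^\alpha;q^{n+\gamma};q,-q^{n+\gamma}z),\\ \psi_n&=q^{-\alpha(n+\gamma)-(n+\gamma-1)(n+\gamma-2)/2}\,\frac{(q^{n+\gamma-\alpha};q)_\infty}{(q^{n+\gamma-1};q)_\infty}\,z^{1-n-\gamma}\,{}_1\phi_1(q^{\alpha-n-\gamma+1};q^{2-n-\gamma};q,-qz). \end{align*} Then \[ \varphi_0\psi_1-\varphi_1\psi_0=q^{-\alpha(\gamma+1)-\frac12\gamma(\gamma-1)}\,(q^{\gamma-\alpha+1};q)_\infty\,(-q^\alpha z;q)_\infty\,z^{-\gamma}. \] Equivalently, \begin{align*} &{}_1\phi_1(q^\alpha;q^\gamma;q,q^{\gamma-\alpha}z)\,{}_1\phi_1(q^{\alpha-\gamma};q^{1-\gamma};q,q^{1-\alpha}z)\\ &+\frac{q^{\gamma-1}(1-q^{\gamma-\alpha})z}{(1-q^{\gamma-1})(1-q^\gamma)}\,{}_1\phi_1(q^\alpha;q^{\gamma+1};q,q^{\gamma-\alpha+1}z)\,{}_1\phi_1(q^{\alpha-\gamma+1};q^{2-\gamma};q,q^{1-\alpha}z)=(z;q)_\infty. \end{align*}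
   Context: Complex powers of $q$ are $q^s=e^{s\log q}$. $(a;q)_k=\prod_{j=0}^{k-1}(1-aq^j)$, $(a;q)_\infty=\lim_k(a;q)_k$, and the $q$-confluent hypergeometric function is \[ {}_1\phi_1(a;b;q,z)=\sum_{k=0}^\infty(-1)^kq^{k(k-1)/2}\frac{(a;q)_k}{(b;q)_k(q;q)_k}\,z^k. \] *)

theory Defs
  imports "HOL-Analysis.Analysis"
begin

definition qpow :: "real \<Rightarrow> complex \<Rightarrow> complex" where
  "qpow q s = exp (s * complex_of_real (ln q))"

definition qpoch :: "complex \<Rightarrow> complex \<Rightarrow> nat \<Rightarrow> complex" where
  "qpoch a q k = (\<Prod>j<k. 1 - a * q ^ j)"

definition qpoch_inf :: "complex \<Rightarrow> complex \<Rightarrow> complex" where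
  "qpoch_inf a q = lim (\<lambda>k. qpoch a q k)"

definition phi11 :: "complex \<Rightarrow> complex \<Rightarrow> real \<Rightarrow> complex \<Rightarrow> complex" where
  "phi11 a b q z = (\<Sum>k. (-1) ^ k * complex_of_real (q ^ (k * (k - 1) div 2))
      * qpoch a (complex_of_real q) k
      / (qpoch b (complex_of_real q) k * qpoch (complex_of_real q) (complex_of_real q) k)
      * z ^ k)"

definition phiN :: "real \<Rightarrow> complex \<Rightarrow> complex \<Rightarrow> complex \<Rightarrow> int \<Rightarrow> complex" where
  "phiN q \<alpha> \<gamma> z n =
     qpoch_inf (qpow q (of_int n + \<gamma>)) (complex_of_real q)
     * phi11 (qpow q \<alpha>) (qpow q (of_int n + \<gamma>)) q (- qpow q (of_int n + \<gamma>) * z)"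

text \<open>psi_n; z^s is taken as exp (s * L), where L is the fixed branch of log z.\<close>
definition psiN :: "real \<Rightarrow> complex \<Rightarrow> complex \<Rightarrow> complex \<Rightarrow> int \<Rightarrow> complex" where
  "psiN q \<alpha> \<gamma> L n =
     qpow q (- \<alpha> * (of_int n + \<gamma>) - (of_int n + \<gamma> - 1) * (of_int n + \<gamma> - 2) / 2)
     * qpoch_inf (qpow q (of_int n + \<gamma> - \<alpha>)) (complex_of_real q)
     / qpoch_inf (qpow q (of_int n + \<gamma> - 1)) (complex_of_real q)
     * exp ((1 - of_int n - \<gamma>) * L)
     * phi11 (qpow q (\<alpha> - of_int n - \<gamma> + 1)) (qpow q (2 - of_int n - \<gamma>)) q
         (- complex_of_real q * exp L)"

end

theory Submission imports Defs begin

definition tc :: "real \<Rightarrow> complex \<Rightarrow> complex \<Rightarrow> nat \<Rightarrow> complex" where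
  "tc q a b k = (-1) ^ k * complex_of_real (q ^ (k * (k - 1) div 2))
      * qpoch a (complex_of_real q) k
      / (qpoch b (complex_of_real q) k * qpoch (complex_of_real q) (complex_of_real q) k)"

lemma phi11_tc: "phi11 a b q x = (\<Sum>k. tc q a b k * x ^ k)"
  unfolding phi11_def tc_def by simp

lemma qpoch_0[simp]: "qpoch a Q 0 = 1" by (simp add: qpoch_def)
lemma qpoch_Suc: "qpoch a Q (Suc k) = qpoch a Q k * (1 - a * Q ^ k)"
  by (simp add: qpoch_def)
lemma qpoch_Suc': "qpoch a Q (Suc k) = (1 - a) * qpoch (a * Q) Q k"
  unfolding qpoch_def by (subst prod.lessThan_Suc_shift) (simp add: mult.assoc power_commutes)

definition nd :: "real \<Rightarrow> complex \<Rightarrow> bool" where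
  "nd q b \<longleftrightarrow> (\<forall>j::nat. b * complex_of_real q ^ j \<noteq> 1)"

lemma qpoch_nz: "nd q b \<Longrightarrow> qpoch b (complex_of_real q) k \<noteq> 0"
  unfolding qpoch_def nd_def by (auto simp: prod_zero_iff)

lemma qqpoch_nz: assumes "0 < q" "q < 1" shows "qpoch (complex_of_real q) (complex_of_real q) k \<noteq> 0"
proof -
  have "complex_of_real q * complex_of_real q ^ j \<noteq> 1" for j
  proof
    assume "complex_of_real q * complex_of_real q ^ j = 1"
    hence "q * q ^ j = 1" by (metis of_real_eq_1_iff of_real_mult of_real_power)
    moreover have "q * q ^ j < 1" using assms using power_Suc_less_one[OF assms, of j] by simp
    ultimately show False by simp
  qed
  thus ?thesis unfolding qpoch_def by (auto simp: prod_zero_iff)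
qed

lemma nd_mult: "nd q b \<Longrightarrow> nd q (b * complex_of_real q)"
  unfolding nd_def by (metis mult.assoc power_Suc)

lemma tri: "Suc k * (Suc k - 1) div 2 = k * (k - 1) div 2 + k"
proof -
  have "Suc k * k = k * (k - 1) + 2 * k" by (cases k) (auto simp: algebra_simps)
  thus ?thesis by simp
qed

lemma tc_Suc:
  assumes "0 < q" "q < 1" "nd q b"
  shows "tc q a b (Suc k) = tc q a b k * (- (complex_of_real q ^ k) * (1 - a * complex_of_real q ^ k))
     / ((1 - b * complex_of_real q ^ k) * (1 - complex_of_real q ^ Suc k))"
proof -
  have n1: "1 - b * complex_of_real q ^ k \<noteq> 0" using assms(3) unfolding nd_def by auto
  have n2: "1 - complex_of_real q ^ Suc k \<noteq> 0"
    using qqpoch_nz[OF assms(1,2), of "Suc k"] by (simp add: qpoch_Suc)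
  have n3: "qpoch b (complex_of_real q) k \<noteq> 0" using qpoch_nz[OF assms(3)] .
  have n4: "qpoch (complex_of_real q) (complex_of_real q) k \<noteq> 0" using qqpoch_nz[OF assms(1,2)] .
  show ?thesis unfolding tc_def tri using n1 n2 n3 n4
    by (simp add: qpoch_Suc power_add field_simps)
qed


lemma aux_frac: fixes d A X N :: real assumes "d \<noteq> 0" "A \<noteq> 0" "X \<noteq> 0"
  shows "d / (4 * A * X) * (2 * A * N / d) = N / (2 * X)"
  using assms by (simp add: field_simps)

lemma tc_summable:
  assumes q: "0 < q" "q < 1" and b: "nd q b"
  shows "summable (\<lambda>k. tc q a b k * x ^ k)"
proof -
  define Q where "Q = complex_of_real q"
  define e where "e = min (1 / (2 * (norm b + 1))) ((1 - q) / (4 * (1 + norm a) * (norm x + 1)))"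
  have e1: "1 / (2 * (norm b + 1)) > 0" by (simp add: add_pos_nonneg) (smt (verit) norm_ge_zero)
  have e2: "(1 - q) / (4 * (1 + norm a) * (norm x + 1)) > 0" using q
    by (intro divide_pos_pos mult_pos_pos) (auto simp: add_pos_nonneg, smt (verit) norm_ge_zero)
  have e: "e > 0" unfolding e_def using e1 e2 by simp
  have "(\<lambda>n. q ^ n) \<longlonglongrightarrow> 0" using q by (intro LIMSEQ_power_zero) simp
  hence "eventually (\<lambda>n. q ^ n < e) sequentially" using e by (auto dest: order_tendstoD)
  then obtain N where N: "\<And>n. n \<ge> N \<Longrightarrow> q ^ n < e" by (auto simp: eventually_sequentially)
  show ?thesis
  proof (rule summable_ratio_test[of "1/2" N])
    fix n assume "n \<ge> N"
    hence qn: "q ^ n < e" by (rule N)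
    have qn0: "0 \<le> q ^ n" "q ^ n \<le> 1" using q by (auto intro: power_le_one)
    have qb: "q ^ n * norm b \<le> 1/2"
    proof -
      have "q ^ n * norm b \<le> e * (norm b + 1)" using qn qn0 by (intro mult_mono) auto
      also have "\<dots> \<le> 1 / (2 * (norm b + 1)) * (norm b + 1)" by (intro mult_right_mono) (auto simp: e_def)
      also have "\<dots> = 1/2" using norm_ge_zero[of b] by (simp add: field_simps) (smt (verit) norm_ge_zero)
      finally show ?thesis .
    qed
    have d1: "norm (1 - b * Q ^ n) \<ge> 1/2"
    proof -
      have "norm (b * Q ^ n) = q ^ n * norm b" using q by (simp add: Q_def norm_mult norm_power)
      moreover have "norm (1::complex) - norm (b * Q ^ n) \<le> norm (1 - b * Q ^ n)" by (rule norm_triangle_ineq2)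
      ultimately show ?thesis using qb by simp
    qed
    have d2: "norm (1 - Q ^ Suc n) \<ge> 1 - q"
    proof -
      have "norm (Q ^ Suc n) = q ^ Suc n" using q unfolding Q_def norm_power by simp
      moreover have "q ^ Suc n \<le> q" using q qn0 by (simp add: mult_left_le)
      moreover have "norm (1::complex) - norm (Q ^ Suc n) \<le> norm (1 - Q ^ Suc n)" by (rule norm_triangle_ineq2)
      ultimately show ?thesis by simp
    qed
    have u1: "norm (1 - a * Q ^ n) \<le> 1 + norm a"
    proof -
      have "norm (1 - a * Q ^ n) \<le> norm (1::complex) + norm (a * Q ^ n)" by (rule norm_triangle_ineq4)
      also have "norm (a * Q ^ n) = norm a * q ^ n" using q by (simp add: Q_def norm_mult norm_power)
      also have "\<dots> \<le> norm a" using qn0 by (simp add: mult_left_le)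
      finally show ?thesis by simp
    qed
    define r where "r = q ^ n * norm (1 - a * Q ^ n) * norm x / (norm (1 - b * Q ^ n) * norm (1 - Q ^ Suc n))"
    have eq: "norm (tc q a b (Suc n) * x ^ Suc n) = r * norm (tc q a b n * x ^ n)"
      unfolding tc_Suc[OF q b] r_def using q
      by (simp add: Q_def norm_mult norm_divide norm_power)
    have "r \<le> q ^ n * (1 + norm a) * norm x / ((1/2) * (1 - q))"
      unfolding r_def using d1 d2 u1 q qn0
      by (intro frac_le mult_mono mult_nonneg_nonneg) auto
    also have "\<dots> = q ^ n * (2 * (1 + norm a) * norm x / (1 - q))" using q by (simp add: field_simps)
    also have "\<dots> \<le> e * (2 * (1 + norm a) * norm x / (1 - q))"
      using qn q by (intro mult_right_mono) auto
    also have "\<dots> \<le> (1 - q) / (4 * (1 + norm a) * (norm x + 1)) * (2 * (1 + norm a) * norm x / (1 - q))"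
      using q by (intro mult_right_mono) (auto simp: e_def)
    also have "\<dots> = norm x / (2 * (norm x + 1))"
    proof -
      have "1 - q \<noteq> 0" "1 + norm a \<noteq> 0" "norm x + 1 \<noteq> 0" using q norm_ge_zero[of a] norm_ge_zero[of x] by linarith+
      thus ?thesis using aux_frac by blast
    qed
    also have "\<dots> \<le> 1/2" using norm_ge_zero[of x] by (simp add: divide_simps) (smt (verit) norm_ge_zero)
    finally have "r \<le> 1/2" .
    thus "norm (tc q a b (Suc n) * x ^ Suc n) \<le> 1/2 * norm (tc q a b n * x ^ n)"
      unfolding eq by (intro mult_right_mono) auto
  qed simp
qed


lemma nd_1: "nd q b \<Longrightarrow> 1 - b \<noteq> 0" unfolding nd_def by (metis eq_iff_diff_eq_0 mult.right_neutral power_0)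
lemma nd_k: "nd q b \<Longrightarrow> 1 - b * complex_of_real q ^ k \<noteq> 0" unfolding nd_def by auto
lemma qk_1: "0 < q \<Longrightarrow> q < 1 \<Longrightarrow> 1 - complex_of_real q ^ Suc k \<noteq> 0"
  using qqpoch_nz[of q "Suc k"] by (simp add: qpoch_Suc)

lemma gen1: fixes P P' X c N R :: complex
  assumes "P * X = c * P'" "P \<noteq> 0" "P' \<noteq> 0" "R \<noteq> 0"
  shows "N / (P' * R) * X = c * (N / (P * R))"
proof -
  have "N / (P' * R) * X = N * (P * X) / (P * P' * R)" using assms by (simp add: field_simps)
  also have "\<dots> = c * (N / (P * R))" using assms by (simp add: field_simps)
  finally show ?thesis .
qed

lemma C1:
  assumes q: "0 < q" "q < 1" and b: "nd q b"
  shows "tc q a (b * complex_of_real q) k * (1 - b * complex_of_real q ^ k) = (1 - b) * tc q a b k"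
proof -
  have "qpoch b (complex_of_real q) k * (1 - b * complex_of_real q ^ k) = (1 - b) * qpoch (b * complex_of_real q) (complex_of_real q) k"
    using qpoch_Suc[of b _ k] qpoch_Suc'[of b _ k] by simp
  thus ?thesis unfolding tc_def using qpoch_nz[OF b, of k] qpoch_nz[OF nd_mult[OF b], of k] qqpoch_nz[OF q, of k]
    by (intro gen1) auto
qed


lemma gen3: fixes B1 X B' R s r Qm a A' :: complex
  assumes "B1 \<noteq> 0" "X \<noteq> 0" "B' \<noteq> 0" "R \<noteq> 0"
  shows "B1 * X * ((- s) * (r * Qm) * ((1 - a) * A') / ((B1 * B') * (R * X))) = - (1 - a) * Qm * (s * r * A' / (B' * R))"
  using assms by (simp add: field_simps)

lemma C3:
  assumes q: "0 < q" "q < 1" and b: "nd q b"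
  shows "(1 - b) * (1 - complex_of_real q ^ Suc m) * tc q a b (Suc m)
     = - (1 - a) * complex_of_real q ^ m * tc q (a * complex_of_real q) (b * complex_of_real q) m"
proof -
  have e1: "complex_of_real (q ^ (Suc m * (Suc m - 1) div 2)) = complex_of_real (q ^ (m * (m - 1) div 2)) * complex_of_real q ^ m"
    unfolding tri by (simp add: power_add)
  have e2: "qpoch (complex_of_real q) (complex_of_real q) (Suc m) = qpoch (complex_of_real q) (complex_of_real q) m * (1 - complex_of_real q ^ Suc m)"
    by (simp add: qpoch_Suc)
  show ?thesis unfolding tc_def e1 e2 qpoch_Suc'[of a] qpoch_Suc'[of b] power_Suc[of "-1::complex"]
    using qpoch_nz[OF nd_mult[OF b], of m] qqpoch_nz[OF q, of m] nd_1[OF b] qk_1[OF q, of m]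
    by (subst gen3[symmetric]) (auto simp: mult_ac)
qed


lemma gen2': fixes t t' X Y B1 Qm a b :: complex
  assumes "t' = B1 * t / X" "X \<noteq> 0" "Y \<noteq> 0" "B1 \<noteq> 0" "X = 1 - b * Qm" "B1 = 1 - b"
  shows "Y * (t * (- Qm * (1 - a * Qm)) / (X * Y)) = - Qm * t - (b - a) / B1 * (Qm * Qm) * t'"
  unfolding assms(1) using assms(2-4) apply (simp add: field_simps)
  apply (insert assms(5,6)) by algebra

lemma gen2: fixes t t' Y Qm a b :: complex
  assumes "t' * (1 - b * Qm) = (1 - b) * t" "1 - b * Qm \<noteq> 0" "Y \<noteq> 0" "1 - b \<noteq> 0"
  shows "Y * (t * (- Qm * (1 - a * Qm)) / ((1 - b * Qm) * Y)) = - Qm * t - (b - a) / (1 - b) * (Qm * Qm) * t'"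
proof -
  have t': "t' = (1 - b) * t / (1 - b * Qm)" using assms(1,2) by (simp add: field_simps)
  show ?thesis by (rule gen2'[OF t' assms(2-4)]) auto
qed

lemma C2:
  assumes q: "0 < q" "q < 1" and b: "nd q b"
  shows "(1 - complex_of_real q ^ Suc m) * tc q a b (Suc m)
     = - (complex_of_real q ^ m) * tc q a b m - (b - a) / (1 - b) * (complex_of_real q ^ m * complex_of_real q ^ m) * tc q a (b * complex_of_real q) m"
  unfolding tc_Suc[OF q b]
  by (rule gen2[OF C1[OF q b] nd_k[OF b] qk_1[OF q] nd_1[OF b]])

lemma gen4: fixes t' T Qm Q a b X :: complex
  assumes "(1 - b) * (1 - Q * Qm) * T = - (1 - a) * Qm * t'" "X \<noteq> 0" "1 - Q * Qm \<noteq> 0"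
  shows "X * (t' * (- Qm * (1 - a * Q * Qm)) / (X * (1 - Q * Qm))) = (1 - b) * (Q * Qm) * T - Qm * t'"
proof -
  have e: "(1 - b) * T = - (1 - a) * Qm * t' / (1 - Q * Qm)" using assms(1,3) by (simp add: field_simps)
  have "(1 - b) * (Q * Qm) * T = Q * Qm * ((1 - b) * T)" by (simp add: mult_ac)
  also have "\<dots> = Q * Qm * (- (1 - a) * Qm * t' / (1 - Q * Qm))" by (simp add: e)
  finally have e2: "(1 - b) * (Q * Qm) * T = Q * Qm * (- (1 - a) * Qm * t' / (1 - Q * Qm))" .
  show ?thesis unfolding e2 using assms(2,3) by (simp add: field_simps)
qed

lemma C4:
  assumes q: "0 < q" "q < 1" and b: "nd q b"
  shows "(1 - b * complex_of_real q ^ Suc m) * tc q (a * complex_of_real q) (b * complex_of_real q) (Suc m)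
     = (1 - b) * complex_of_real q ^ Suc m * tc q a b (Suc m) - complex_of_real q ^ m * tc q (a * complex_of_real q) (b * complex_of_real q) m"
proof -
  have "(1 - b * complex_of_real q ^ Suc m) * tc q (a * complex_of_real q) (b * complex_of_real q) (Suc m)
    = (1 - b * complex_of_real q * complex_of_real q ^ m) * (tc q (a * complex_of_real q) (b * complex_of_real q) m
       * (- (complex_of_real q ^ m) * (1 - a * complex_of_real q * complex_of_real q ^ m))
       / ((1 - b * complex_of_real q * complex_of_real q ^ m) * (1 - complex_of_real q * complex_of_real q ^ m)))"
    unfolding tc_Suc[OF q nd_mult[OF b]] by (simp add: mult.assoc)
  also have "\<dots> = (1 - b) * (complex_of_real q * complex_of_real q ^ m) * tc q a b (Suc m) - complex_of_real q ^ m * tc q (a * complex_of_real q) (b * complex_of_real q) m"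
    apply (rule gen4)
    using C3[OF q b, of m a] nd_k[OF b, of "Suc m"] qk_1[OF q, of m] by (auto simp: mult.assoc)
  finally show ?thesis by simp
qed


lemma tc_0[simp]: "tc q a b 0 = 1" by (simp add: tc_def)

lemma phi_sums:
  assumes q: "0 < q" "q < 1" and b: "nd q b"
  shows "(\<lambda>k. tc q a b k * x ^ k) sums phi11 a b q x"
  unfolding phi11_tc using tc_summable[OF q b] by (rule summable_sums)

lemma phi_sums_scaled:
  assumes q: "0 < q" "q < 1" and b: "nd q b"
  shows "(\<lambda>k. (tc q a b k * c ^ k) * x ^ k) sums phi11 a b q (c * x)"
  using phi_sums[OF q b, of a "c * x"] by (simp add: power_mult_distrib mult.assoc)

lemma sums_shift:
  fixes g :: "nat \<Rightarrow> complex" and x G :: complex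
  assumes "(\<lambda>k. g k * x ^ k) sums G"
  shows "(\<lambda>k. (if k = 0 then 0 else g (k - 1)) * x ^ k) sums (x * G)"
proof -
  have "(\<lambda>k. x * (g k * x ^ k)) sums (x * G)" using sums_mult[OF assms, of x] .
  hence "(\<lambda>k. (if Suc k = 0 then 0 else g (Suc k - 1)) * x ^ Suc k) sums (x * G)"
    by (simp add: mult_ac)
  thus ?thesis by (subst (asm) sums_Suc_iff) simp
qed

lemma P1:
  assumes q: "0 < q" "q < 1" and b: "nd q b"
  shows "phi11 a (b * complex_of_real q) q x = (1 - b) * phi11 a b q x + b * phi11 a (b * complex_of_real q) q (complex_of_real q * x)"
proof -
  have s: "(\<lambda>k. ((1 - b) * tc q a b k + b * (tc q a (b * complex_of_real q) k * complex_of_real q ^ k)) * x ^ k)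
     sums ((1 - b) * phi11 a b q x + b * phi11 a (b * complex_of_real q) q (complex_of_real q * x))"
    using sums_add[OF sums_mult[OF phi_sums[OF q b, of a x], of "1 - b"] sums_mult[OF phi_sums_scaled[OF q nd_mult[OF b], of a "complex_of_real q" x], of b]]
    by (simp add: algebra_simps)
  have e: "(1 - b) * tc q a b k + b * (tc q a (b * complex_of_real q) k * complex_of_real q ^ k) = tc q a (b * complex_of_real q) k" for k
    using C1[OF q b, of a k] by (simp add: algebra_simps)
  show ?thesis using s unfolding e by (metis phi_sums[OF q nd_mult[OF b]] sums_unique2)
qed


lemma P2:
  assumes q: "0 < q" "q < 1" and b: "nd q b"
  shows "phi11 a b q x = (1 - x) * phi11 a b q (complex_of_real q * x)
     - x * (b - a) / (1 - b) * phi11 a (b * complex_of_real q) q (complex_of_real q * complex_of_real q * x)"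
proof -
  define Q where "Q = complex_of_real q"
  define g where "g k = tc q a b k * Q ^ k + (b - a) / (1 - b) * (tc q a (b * Q) k * (Q * Q) ^ k)" for k
  have s1: "(\<lambda>k. (tc q a b k * Q ^ k) * x ^ k) sums phi11 a b q (Q * x)"
    unfolding Q_def by (rule phi_sums_scaled[OF q b])
  have s2: "(\<lambda>k. g k * x ^ k) sums (phi11 a b q (Q * x) + (b - a) / (1 - b) * phi11 a (b * Q) q (Q * Q * x))"
    using sums_add[OF s1 sums_mult[OF phi_sums_scaled[OF q nd_mult[OF b], of a "Q * Q" x], of "(b - a) / (1 - b)"]]
    unfolding g_def Q_def by (simp add: algebra_simps)
  have s3: "(\<lambda>k. tc q a b k * Q ^ k * x ^ k - (if k = 0 then 0 else g (k - 1)) * x ^ k) sums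
      (phi11 a b q (Q * x) - x * (phi11 a b q (Q * x) + (b - a) / (1 - b) * phi11 a (b * Q) q (Q * Q * x)))"
    by (rule sums_diff[OF s1 sums_shift[OF s2]])
  have e: "tc q a b k * Q ^ k * x ^ k - (if k = 0 then 0 else g (k - 1)) * x ^ k = tc q a b k * x ^ k" for k
  proof (cases k)
    case (Suc m)
    have "tc q a b (Suc m) * Q ^ Suc m - g m = tc q a b (Suc m)"
      using C2[OF q b, of m a] unfolding g_def Q_def by (simp add: algebra_simps power_mult_distrib)
    thus ?thesis using Suc by (simp add: algebra_simps)
  qed simp
  have "phi11 a b q x = phi11 a b q (Q * x) - x * (phi11 a b q (Q * x) + (b - a) / (1 - b) * phi11 a (b * Q) q (Q * Q * x))"
    using s3 unfolding e by (metis phi_sums[OF q b] sums_unique2)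
  thus ?thesis unfolding Q_def by (simp add: algebra_simps)
qed

lemma P3:
  assumes q: "0 < q" "q < 1" and b: "nd q b"
  shows "phi11 a b q x = phi11 a b q (complex_of_real q * x)
     - x * (1 - a) / (1 - b) * phi11 (a * complex_of_real q) (b * complex_of_real q) q (complex_of_real q * x)"
proof -
  define Q where "Q = complex_of_real q"
  define g where "g k = (1 - a) / (1 - b) * (tc q (a * Q) (b * Q) k * Q ^ k)" for k
  have s1: "(\<lambda>k. (tc q a b k * Q ^ k) * x ^ k) sums phi11 a b q (Q * x)"
    unfolding Q_def by (rule phi_sums_scaled[OF q b])
  have s2: "(\<lambda>k. g k * x ^ k) sums ((1 - a) / (1 - b) * phi11 (a * Q) (b * Q) q (Q * x))"
    using sums_mult[OF phi_sums_scaled[OF q nd_mult[OF b], of "a * Q" Q x], of "(1 - a) / (1 - b)"]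
    unfolding g_def Q_def by (simp add: algebra_simps)
  have s3: "(\<lambda>k. tc q a b k * Q ^ k * x ^ k - (if k = 0 then 0 else g (k - 1)) * x ^ k) sums
      (phi11 a b q (Q * x) - x * ((1 - a) / (1 - b) * phi11 (a * Q) (b * Q) q (Q * x)))"
    by (rule sums_diff[OF s1 sums_shift[OF s2]])
  have e: "tc q a b k * Q ^ k * x ^ k - (if k = 0 then 0 else g (k - 1)) * x ^ k = tc q a b k * x ^ k" for k
  proof (cases k)
    case (Suc m)
    have "tc q a b (Suc m) * Q ^ Suc m - g m = tc q a b (Suc m)"
    proof -
      have h: "(1 - b) * g m = (1 - a) * (tc q (a * Q) (b * Q) m * Q ^ m)" unfolding g_def using nd_1[OF b] by simp
      have c: "(1 - b) * (1 - Q ^ Suc m) * tc q a b (Suc m) = - (1 - a) * Q ^ m * tc q (a * Q) (b * Q) m"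
        using C3[OF q b, of m a] unfolding Q_def .
      have h2: "(1 - b) * g m = - ((1 - b) * (1 - Q ^ Suc m) * tc q a b (Suc m))" using h c by (simp add: mult_ac) (simp add: algebra_simps)
      have "(1 - b) * (tc q a b (Suc m) * Q ^ Suc m - g m) = (1 - b) * (tc q a b (Suc m) * Q ^ Suc m) - (1 - b) * g m"
        by (rule right_diff_distrib)
      also have "\<dots> = (1 - b) * (tc q a b (Suc m) * Q ^ Suc m) + ((1 - b) * (1 - Q ^ Suc m) * tc q a b (Suc m))"
        by (simp only: h2) simp
      also have "\<dots> = (1 - b) * tc q a b (Suc m)" by (simp add: algebra_simps)
      finally have "(1 - b) * (tc q a b (Suc m) * Q ^ Suc m - g m) = (1 - b) * tc q a b (Suc m)" .
      thus ?thesis using nd_1[OF b] by simp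
    qed
    thus ?thesis using Suc by (simp add: algebra_simps)
  qed simp
  have "phi11 a b q x = phi11 a b q (Q * x) - x * ((1 - a) / (1 - b) * phi11 (a * Q) (b * Q) q (Q * x))"
    using s3 unfolding e by (metis phi_sums[OF q b] sums_unique2)
  thus ?thesis unfolding Q_def by (simp add: algebra_simps)
qed

lemma P4:
  assumes q: "0 < q" "q < 1" and b: "nd q b"
  shows "phi11 (a * complex_of_real q) (b * complex_of_real q) q x = (1 - b) * phi11 a b q (complex_of_real q * x)
     + (b - x) * phi11 (a * complex_of_real q) (b * complex_of_real q) q (complex_of_real q * x)"
proof -
  define Q where "Q = complex_of_real q"
  have s1: "(\<lambda>k. ((1 - b) * (tc q a b k * Q ^ k) + b * (tc q (a * Q) (b * Q) k * Q ^ k)) * x ^ k)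
      sums ((1 - b) * phi11 a b q (Q * x) + b * phi11 (a * Q) (b * Q) q (Q * x))"
    using sums_add[OF sums_mult[OF phi_sums_scaled[OF q b, of a Q x], of "1 - b"]
        sums_mult[OF phi_sums_scaled[OF q nd_mult[OF b], of "a * Q" Q x], of b]]
    unfolding Q_def by (simp add: algebra_simps)
  have s2: "(\<lambda>k. (tc q (a * Q) (b * Q) k * Q ^ k) * x ^ k) sums phi11 (a * Q) (b * Q) q (Q * x)"
    unfolding Q_def by (rule phi_sums_scaled[OF q nd_mult[OF b]])
  have s3: "(\<lambda>k. ((1 - b) * (tc q a b k * Q ^ k) + b * (tc q (a * Q) (b * Q) k * Q ^ k)) * x ^ k
      - (if k = 0 then 0 else tc q (a * Q) (b * Q) (k - 1) * Q ^ (k - 1)) * x ^ k) sums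
      ((1 - b) * phi11 a b q (Q * x) + b * phi11 (a * Q) (b * Q) q (Q * x) - x * phi11 (a * Q) (b * Q) q (Q * x))"
    by (rule sums_diff[OF s1 sums_shift[OF s2]])
  have e: "((1 - b) * (tc q a b k * Q ^ k) + b * (tc q (a * Q) (b * Q) k * Q ^ k)) * x ^ k
      - (if k = 0 then 0 else tc q (a * Q) (b * Q) (k - 1) * Q ^ (k - 1)) * x ^ k = tc q (a * Q) (b * Q) k * x ^ k" for k
  proof (cases k)
    case (Suc m)
    have "(1 - b) * (tc q a b (Suc m) * Q ^ Suc m) + b * (tc q (a * Q) (b * Q) (Suc m) * Q ^ Suc m)
       - tc q (a * Q) (b * Q) m * Q ^ m = tc q (a * Q) (b * Q) (Suc m)"
      using C4[OF q b, of m a] unfolding Q_def by (simp add: algebra_simps)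
    thus ?thesis using Suc by (simp add: algebra_simps)
  qed simp
  have "phi11 (a * Q) (b * Q) q x = (1 - b) * phi11 a b q (Q * x) + b * phi11 (a * Q) (b * Q) q (Q * x) - x * phi11 (a * Q) (b * Q) q (Q * x)"
    using s3 unfolding e by (metis phi_sums[OF q nd_mult[OF b]] sums_unique2 Q_def)
  thus ?thesis unfolding Q_def by (simp add: algebra_simps)
qed

lemma bil:
  fixes m11 m12 m21 m22 n11 n12 n21 n22 k z w A0 B0 C0 D0 :: complex
  assumes "m11 * n11 + k * m21 * n21 = w" "m11 * n12 + k * m21 * n22 = 0"
    "m12 * n11 + k * m22 * n21 = 0" "m12 * n12 + k * m22 * n22 = w * k'"
  shows "(m11 * A0 + m12 * C0) * (n11 * B0 + n12 * D0) + k * (m21 * A0 + m22 * C0) * (n21 * B0 + n22 * D0)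
     = w * (A0 * B0 + k' * C0 * D0)"
proof -
  have "(m11 * A0 + m12 * C0) * (n11 * B0 + n12 * D0) + k * (m21 * A0 + m22 * C0) * (n21 * B0 + n22 * D0)
    = (m11 * n11 + k * m21 * n21) * A0 * B0 + (m11 * n12 + k * m21 * n22) * A0 * D0
     + (m12 * n11 + k * m22 * n21) * C0 * B0 + (m12 * n12 + k * m22 * n22) * C0 * D0"
    by (simp add: algebra_simps)
  thus ?thesis unfolding assms by (simp add: algebra_simps)
qed

lemma fracQ: fixes X Y Q a :: complex assumes "Q \<noteq> 0" shows "(X / (Q * a)) / (Y / Q) = X / (a * Y)"
  using assms by (cases "Y = 0"; cases "a = 0") (simp_all add: field_simps)

lemma key:
  fixes a b Q z A0 B0 C0 D0 :: complex
  assumes "a \<noteq> 0" "b \<noteq> 0" "Q \<noteq> 0" "1 - b \<noteq> 0" "1 - b / Q \<noteq> 0" "1 - Q / b \<noteq> 0"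
    and kd: "\<kappa> = b / Q * (1 - b / a) / ((1 - b / Q) * (1 - b))"
  shows "((1 - b / a * z) * A0 + (- (b / a * z * (b - a) / (1 - b))) * C0)
          * (1 * B0 + (- (Q / a * z * (1 - a / b) / (1 - Q / b))) * D0)
        + (\<kappa> * z) * ((1 - b) * A0 + b * C0) * ((1 - Q / b) * B0 + (Q / b - Q / a * z) * D0)
       = (1 - z) * (A0 * B0 + \<kappa> * (Q * z) * C0 * D0)"
proof (rule bil)
  have Qb: "Q - b \<noteq> 0" "b - Q \<noteq> 0" using assms(3,5) by (auto simp: field_simps)
  have e1: "b / Q * (1 - b / a) = b * (a - b) / (Q * a)" using assms(1,3) by (simp add: field_simps)
  have e2: "(1 - b / Q) * (1 - b) = (Q - b) * (1 - b) / Q" using assms(3) by (simp add: field_simps)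
  have f: "a * inverse a = 1" "b * inverse b = 1" "Q * inverse Q = 1" "(1 - b) * inverse (1 - b) = 1"
    "(1 - Q * inverse b) * inverse (1 - Q * inverse b) = 1" "(Q - b) * inverse (Q - b) = 1"
    using assms(1-6) Qb by (auto simp: divide_inverse)
  have k: "\<kappa> = b * (a - b) / (a * (Q - b) * (1 - b))" unfolding kd e1 e2 fracQ[OF assms(3)] by (simp add: mult.assoc)
  show "(1 - b / a * z) * 1 + \<kappa> * z * (1 - b) * (1 - Q / b) = 1 - z"
    unfolding k divide_inverse mult_inverse_of_nat_commute inverse_mult_distrib using f by algebra
  show "(1 - b / a * z) * - (Q / a * z * (1 - a / b) / (1 - Q / b)) + \<kappa> * z * (1 - b) * (Q / b - Q / a * z) = 0"
    unfolding k divide_inverse mult_inverse_of_nat_commute inverse_mult_distrib using f by algebra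
  show "- (b / a * z * (b - a) / (1 - b)) * 1 + \<kappa> * z * b * (1 - Q / b) = 0"
    unfolding k divide_inverse mult_inverse_of_nat_commute inverse_mult_distrib using f by algebra
  show "- (b / a * z * (b - a) / (1 - b)) * - (Q / a * z * (1 - a / b) / (1 - Q / b)) + \<kappa> * z * b * (Q / b - Q / a * z) = (1 - z) * (\<kappa> * (Q * z))"
    unfolding k divide_inverse mult_inverse_of_nat_commute inverse_mult_distrib using f by algebra
qed

lemma phi11_zero[simp]: "phi11 a b q 0 = 1"
  unfolding phi11_tc by simp

lemma phi11_cont:
  assumes q: "0 < q" "q < 1" and b: "nd q b"
  shows "isCont (phi11 a b q) w"
proof -
  have "isCont (\<lambda>x. \<Sum>k. tc q a b k * x ^ k) w"
    by (rule isCont_powser_converges_everywhere) (rule tc_summable[OF q b])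
  thus ?thesis unfolding phi11_tc[abs_def] .
qed

lemma second:
  fixes a b z :: complex
  assumes q: "0 < q" "q < 1" and a: "a \<noteq> 0" and b0: "b \<noteq> 0" and b: "nd q b"
    and b': "nd q (complex_of_real q / b)" and bq: "1 - b / complex_of_real q \<noteq> 0"
  shows "phi11 a b q (b / a * z) * phi11 (a / b) (complex_of_real q / b) q (complex_of_real q / a * z)
      + b / complex_of_real q * (1 - b / a) / ((1 - b / complex_of_real q) * (1 - b)) * z
        * phi11 a (b * complex_of_real q) q (b * complex_of_real q / a * z)
        * phi11 (a / b * complex_of_real q) (complex_of_real q / b * complex_of_real q) q (complex_of_real q / a * z)
      = qpoch_inf z (complex_of_real q)"
proof -
  define Q where "Q = complex_of_real q"
  have Q0: "Q \<noteq> 0" using q by (simp add: Q_def)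
  define \<kappa> where "\<kappa> = b / Q * (1 - b / a) / ((1 - b / Q) * (1 - b))"
  define F where "F w = phi11 a b q (b / a * w) * phi11 (a / b) (Q / b) q (Q / a * w)
      + \<kappa> * w * phi11 a (b * Q) q (b * Q / a * w) * phi11 (a / b * Q) (Q / b * Q) q (Q / a * w)" for w
  have rec: "F w = (1 - w) * F (Q * w)" for w
  proof -
    have eA: "phi11 a b q (b / a * w) = (1 - b / a * w) * phi11 a b q (b / a * (Q * w))
        + (- (b / a * w * (b - a) / (1 - b))) * phi11 a (b * Q) q (b * Q / a * (Q * w))"
      using P2[OF q b, of a "b / a * w"] unfolding Q_def[symmetric] by (simp add: mult_ac)
    have eC: "phi11 a (b * Q) q (b * Q / a * w) = (1 - b) * phi11 a b q (b / a * (Q * w)) + b * phi11 a (b * Q) q (b * Q / a * (Q * w))"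
      using P1[OF q b, of a "Q * (b / a * w)"] unfolding Q_def[symmetric] by (simp add: mult_ac)
    have eB: "phi11 (a / b) (Q / b) q (Q / a * w) = 1 * phi11 (a / b) (Q / b) q (Q / a * (Q * w))
        + (- (Q / a * w * (1 - a / b) / (1 - Q / b))) * phi11 (a / b * Q) (Q / b * Q) q (Q / a * (Q * w))"
      using P3[OF q b', of "a / b" "Q / a * w"] unfolding Q_def[symmetric] by (simp add: mult_ac)
    have eD: "phi11 (a / b * Q) (Q / b * Q) q (Q / a * w) = (1 - Q / b) * phi11 (a / b) (Q / b) q (Q / a * (Q * w))
        + (Q / b - Q / a * w) * phi11 (a / b * Q) (Q / b * Q) q (Q / a * (Q * w))"
      using P4[OF q b', of "a / b" "Q / a * w"] unfolding Q_def[symmetric] by (simp add: mult_ac)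
    show ?thesis unfolding F_def eA eB eC eD
      by (rule key[OF a b0 Q0 nd_1[OF b] bq[folded Q_def] nd_1[OF b', folded Q_def] \<kappa>_def])
  qed
  have iter: "F z = qpoch z Q n * F (Q ^ n * z)" for n
  proof (induction n)
    case (Suc n)
    have "F (Q ^ n * z) = (1 - Q ^ n * z) * F (Q ^ Suc n * z)" using rec[of "Q ^ n * z"] by (simp add: mult_ac)
    thus ?case using Suc by (simp add: qpoch_Suc mult_ac)
  qed simp
  have lim0: "(\<lambda>n. Q ^ n * z) \<longlonglongrightarrow> 0"
    using q by (auto intro!: tendsto_eq_intros LIMSEQ_power_zero simp: Q_def)
  have lc: "(\<lambda>n. phi11 a' b' q (c * (Q ^ n * z))) \<longlonglongrightarrow> 1" if "nd q b'" for a' b' c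
  proof -
    have "(\<lambda>n. c * (Q ^ n * z)) \<longlonglongrightarrow> c * 0" by (intro tendsto_intros lim0)
    from isCont_tendsto_compose[OF phi11_cont[OF q that] this] show ?thesis by simp
  qed
  have l1: "(\<lambda>n. phi11 a b q (b / a * (Q ^ n * z))) \<longlonglongrightarrow> 1" by (rule lc[OF b])
  have l2: "(\<lambda>n. phi11 (a / b) (Q / b) q (Q / a * (Q ^ n * z))) \<longlonglongrightarrow> 1" by (rule lc) (use b' in \<open>simp add: Q_def\<close>)
  have l3: "(\<lambda>n. phi11 a (b * Q) q (b * Q / a * (Q ^ n * z))) \<longlonglongrightarrow> 1" by (rule lc) (use nd_mult[OF b] in \<open>simp add: Q_def\<close>)
  have l4: "(\<lambda>n. phi11 (a / b * Q) (Q / b * Q) q (Q / a * (Q ^ n * z))) \<longlonglongrightarrow> 1" by (rule lc) (use nd_mult[OF b'] in \<open>simp add: Q_def\<close>)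
  have FL: "(\<lambda>n. F (Q ^ n * z)) \<longlonglongrightarrow> 1 * 1 + \<kappa> * 0 * 1 * 1"
    unfolding F_def
    by (intro tendsto_add tendsto_mult l1 l2 l3 l4 tendsto_mult_left lim0)
  hence FL1: "(\<lambda>n. F (Q ^ n * z)) \<longlonglongrightarrow> 1" by simp
  have ev: "eventually (\<lambda>n. F (Q ^ n * z) \<noteq> 0) sequentially"
    using tendsto_imp_eventually_ne[OF FL1] by simp
  have t: "(\<lambda>n. F z / F (Q ^ n * z)) \<longlonglongrightarrow> F z" using tendsto_divide[OF tendsto_const FL1] by simp
  have e: "eventually (\<lambda>n. F z / F (Q ^ n * z) = qpoch z Q n) sequentially"
    using ev by (rule eventually_mono) (metis iter nonzero_mult_div_cancel_right)
  have "(\<lambda>n. qpoch z Q n) \<longlonglongrightarrow> F z" by (rule Lim_transform_eventually[OF t e])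
  hence "qpoch_inf z Q = F z" unfolding qpoch_inf_def by (rule limI)
  thus ?thesis unfolding F_def \<kappa>_def Q_def by (simp add: mult_ac)
qed


lemma nd_0: "nd q 0" unfolding nd_def by simp

lemma euler_rec:
  assumes q: "0 < q" "q < 1"
  shows "phi11 0 0 q w = (1 - w) * phi11 0 0 q (complex_of_real q * w)"
  using P2[OF q nd_0, of 0 w] by simp

lemma euler_iter:
  assumes q: "0 < q" "q < 1"
  shows "phi11 0 0 q w = qpoch w (complex_of_real q) n * phi11 0 0 q (complex_of_real q ^ n * w)"
proof (induction n)
  case (Suc n)
  have "phi11 0 0 q (complex_of_real q ^ n * w) = (1 - complex_of_real q ^ n * w) * phi11 0 0 q (complex_of_real q ^ Suc n * w)"
    using euler_rec[OF q, of "complex_of_real q ^ n * w"] by (simp add: mult_ac)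
  thus ?case using Suc by (simp add: qpoch_Suc mult_ac)
qed simp

lemma euler_tail:
  assumes q: "0 < q" "q < 1"
  shows "(\<lambda>n. phi11 0 0 q (complex_of_real q ^ n * w)) \<longlonglongrightarrow> 1"
proof -
  have "(\<lambda>n. complex_of_real q ^ n * w) \<longlonglongrightarrow> 0 * w"
    using q by (intro tendsto_intros LIMSEQ_power_zero) simp
  from isCont_tendsto_compose[OF phi11_cont[OF q nd_0] this] show ?thesis by simp
qed

lemma euler:
  assumes q: "0 < q" "q < 1"
  shows "qpoch_inf w (complex_of_real q) = phi11 0 0 q w"
proof -
  define Q where "Q = complex_of_real q"
  have FL1: "(\<lambda>n. phi11 0 0 q (Q ^ n * w)) \<longlonglongrightarrow> 1" unfolding Q_def by (rule euler_tail[OF q])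
  have ev: "eventually (\<lambda>n. phi11 0 0 q (Q ^ n * w) \<noteq> 0) sequentially"
    using tendsto_imp_eventually_ne[OF FL1] by simp
  have t: "(\<lambda>n. phi11 0 0 q w / phi11 0 0 q (Q ^ n * w)) \<longlonglongrightarrow> phi11 0 0 q w"
    using tendsto_divide[OF tendsto_const FL1] by simp
  have e: "eventually (\<lambda>n. phi11 0 0 q w / phi11 0 0 q (Q ^ n * w) = qpoch w Q n) sequentially"
    using ev by (rule eventually_mono) (metis euler_iter[OF q] Q_def nonzero_mult_div_cancel_right)
  have "(\<lambda>n. qpoch w Q n) \<longlonglongrightarrow> phi11 0 0 q w" by (rule Lim_transform_eventually[OF t e])
  thus ?thesis unfolding qpoch_inf_def Q_def by (rule limI)
qed

lemma qpoch_inf_shift: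
  assumes q: "0 < q" "q < 1"
  shows "qpoch_inf w (complex_of_real q) = (1 - w) * qpoch_inf (w * complex_of_real q) (complex_of_real q)"
  unfolding euler[OF q] using euler_rec[OF q, of w] by (simp add: mult_ac)

lemma qpoch_inf_nz:
  assumes q: "0 < q" "q < 1" and w: "nd q w"
  shows "qpoch_inf w (complex_of_real q) \<noteq> 0"
proof -
  have ev: "eventually (\<lambda>n. phi11 0 0 q (complex_of_real q ^ n * w) \<noteq> 0) sequentially"
    using tendsto_imp_eventually_ne[OF euler_tail[OF q]] by simp
  then obtain n where "phi11 0 0 q (complex_of_real q ^ n * w) \<noteq> 0" by (auto simp: eventually_sequentially)
  moreover have "qpoch w (complex_of_real q) n \<noteq> 0" by (rule qpoch_nz[OF w])
  ultimately show ?thesis unfolding euler[OF q] euler_iter[OF q, of w n] by simp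
qed


lemma qpow_add: "qpow q (s + t) = qpow q s * qpow q t" unfolding qpow_def by (simp add: distrib_right exp_add)
lemma qpow_diff: "qpow q (s - t) = qpow q s / qpow q t" unfolding qpow_def by (simp add: left_diff_distrib exp_diff)
lemma qpow_minus: "qpow q (- s) = inverse (qpow q s)" unfolding qpow_def by (simp add: exp_minus)
lemma qpow_nz: "qpow q s \<noteq> 0" unfolding qpow_def by simp
lemma qpow_1: "0 < q \<Longrightarrow> qpow q 1 = complex_of_real q"
  unfolding qpow_def by (simp add: exp_of_real)
lemma qpow_nat: "0 < q \<Longrightarrow> qpow q (of_nat j) = complex_of_real q ^ j"
proof -
  assume q: "0 < q"
  have "qpow q (of_nat j) = exp (complex_of_real (ln q)) ^ j"
    unfolding qpow_def by (simp add: exp_of_nat_mult[symmetric] mult.commute)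
  also have "exp (complex_of_real (ln q)) = complex_of_real q" using q by (simp add: exp_of_real)
  finally show ?thesis .
qed

lemma gen_final:
  fixes P Pb PbQ Pba1 A B C D e z a x y d1 d2 E :: complex
  assumes "PbQ \<noteq> 0" "d1 \<noteq> 0" "d2 \<noteq> 0"
    and "A * B + x * y / (d1 * d2) * (- a * z) * C * D = E"
  shows "(d2 * PbQ * A) * (P * Pba1 / (d2 * PbQ) * e * B)
        - (PbQ * C) * (P * a * x * (y * Pba1) / (d1 * d2 * PbQ) * (z * e) * D)
       = P * Pba1 * E * e"
proof -
  have l: "(d2 * PbQ * A) * (P * Pba1 / (d2 * PbQ) * e * B) = P * Pba1 * e * (A * B)"
    using assms(1,3) by (simp add: field_simps)
  have r: "(PbQ * C) * (P * a * x * (y * Pba1) / (d1 * d2 * PbQ) * (z * e) * D)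
     = P * Pba1 * e * (- (x * y / (d1 * d2) * (- a * z) * C * D))"
    using assms(1-3) by (simp add: field_simps)
  show ?thesis unfolding l r assms(4)[symmetric] by (simp add: algebra_simps)
qed

theorem mainTheorem12:
  fixes q :: real and \<alpha> \<gamma> z L :: complex
  assumes "0 < q" and "q < 1"
    and "\<forall>m::int. qpow q \<gamma> \<noteq> qpow q (of_int m)"
    and "z \<noteq> 0" and "exp L = z"
  shows "phiN q \<alpha> \<gamma> z 0 * psiN q \<alpha> \<gamma> L 1 - phiN q \<alpha> \<gamma> z 1 * psiN q \<alpha> \<gamma> L 0
           = qpow q (- \<alpha> * (\<gamma> + 1) - \<gamma> * (\<gamma> - 1) / 2)
             * qpoch_inf (qpow q (\<gamma> - \<alpha> + 1)) (complex_of_real q)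
             * qpoch_inf (- qpow q \<alpha> * z) (complex_of_real q)
             * exp (- \<gamma> * L)
       \<and> phi11 (qpow q \<alpha>) (qpow q \<gamma>) q (qpow q (\<gamma> - \<alpha>) * z)
           * phi11 (qpow q (\<alpha> - \<gamma>)) (qpow q (1 - \<gamma>)) q (qpow q (1 - \<alpha>) * z)
         + qpow q (\<gamma> - 1) * (1 - qpow q (\<gamma> - \<alpha>)) * z
           / ((1 - qpow q (\<gamma> - 1)) * (1 - qpow q \<gamma>))
           * phi11 (qpow q \<alpha>) (qpow q (\<gamma> + 1)) q (qpow q (\<gamma> - \<alpha> + 1) * z)
           * phi11 (qpow q (\<alpha> - \<gamma> + 1)) (qpow q (2 - \<gamma>)) q (qpow q (1 - \<alpha>) * z)
         = qpoch_inf z (complex_of_real q)"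
proof -
  have q: "0 < q" "q < 1" by fact+
  define Q where "Q = complex_of_real q"
  define a where "a = qpow q \<alpha>"
  define b where "b = qpow q \<gamma>"
  have Q0: "Q \<noteq> 0" using q by (simp add: Q_def)
  have a0: "a \<noteq> 0" and b0: "b \<noteq> 0" unfolding a_def b_def by (rule qpow_nz)+
  have q1: "qpow q 1 = Q" unfolding Q_def by (rule qpow_1[OF q(1)])
  have q2: "qpow q 2 = Q * Q" using qpow_add[of q 1 1] q1 by simp
  have ndb: "nd q b" unfolding nd_def
  proof
    fix j :: nat
    show "b * complex_of_real q ^ j \<noteq> 1"
    proof
      assume h: "b * complex_of_real q ^ j = 1"
      have "qpow q (of_int (- int j)) = inverse (complex_of_real q ^ j)"
        using qpow_minus[of q "of_nat j"] qpow_nat[OF q(1), of j] by simp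
      also have "\<dots> = b" using h q(1) by (auto simp: inverse_eq_divide divide_eq_eq)
      finally show False using assms(3) b_def by metis
    qed
  qed
  have ndb': "nd q (Q / b)" unfolding nd_def
  proof
    fix j :: nat
    show "Q / b * complex_of_real q ^ j \<noteq> 1"
    proof
      assume h: "Q / b * complex_of_real q ^ j = 1"
      have "qpow q (of_int (int (Suc j))) = complex_of_real q ^ Suc j"
        using qpow_nat[OF q(1), of "Suc j"] by simp
      also have "\<dots> = b" using h b0 by (simp add: field_simps Q_def)
      finally show False using assms(3) b_def by metis
    qed
  qed
  have bQ: "1 - b / Q \<noteq> 0"
  proof
    assume "1 - b / Q = 0"
    hence "b = qpow q (of_int 1)" using Q0 q1 by (simp add: field_simps)
    thus False using assms(3) b_def by metis
  qed
  have SEC: "phi11 a b q (b / a * w) * phi11 (a / b) (Q / b) q (Q / a * w)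
      + b / Q * (1 - b / a) / ((1 - b / Q) * (1 - b)) * w
        * phi11 a (b * Q) q (b * Q / a * w) * phi11 (a / b * Q) (Q / b * Q) q (Q / a * w)
      = qpoch_inf w Q" for w
    using second[OF q a0 b0 ndb ndb'[unfolded Q_def] bQ[unfolded Q_def], of w] unfolding Q_def .
  have part2: "phi11 (qpow q \<alpha>) (qpow q \<gamma>) q (qpow q (\<gamma> - \<alpha>) * z)
           * phi11 (qpow q (\<alpha> - \<gamma>)) (qpow q (1 - \<gamma>)) q (qpow q (1 - \<alpha>) * z)
         + qpow q (\<gamma> - 1) * (1 - qpow q (\<gamma> - \<alpha>)) * z
           / ((1 - qpow q (\<gamma> - 1)) * (1 - qpow q \<gamma>))
           * phi11 (qpow q \<alpha>) (qpow q (\<gamma> + 1)) q (qpow q (\<gamma> - \<alpha> + 1) * z)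
           * phi11 (qpow q (\<alpha> - \<gamma> + 1)) (qpow q (2 - \<gamma>)) q (qpow q (1 - \<alpha>) * z)
         = qpoch_inf z (complex_of_real q)"
  proof -
    have "qpow q (\<gamma> - 1) * (1 - qpow q (\<gamma> - \<alpha>)) * z / ((1 - qpow q (\<gamma> - 1)) * (1 - qpow q \<gamma>))
      = b / Q * (1 - b / a) / ((1 - b / Q) * (1 - b)) * z"
      by (simp add: qpow_diff q1 a_def b_def)
    moreover have "qpow q (\<alpha> - \<gamma> + 1) = a / b * Q" "qpow q (2 - \<gamma>) = Q / b * Q"
      "qpow q (\<gamma> - \<alpha> + 1) = b * Q / a" "qpow q (\<gamma> + 1) = b * Q"
      by (simp_all add: qpow_diff qpow_add q1 q2 a_def b_def)
    moreover have "qpow q (\<gamma> - \<alpha>) = b / a" "qpow q (\<alpha> - \<gamma>) = a / b" "qpow q (1 - \<gamma>) = Q / b"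
      "qpow q (1 - \<alpha>) = Q / a"
      by (simp_all add: qpow_diff q1 a_def b_def)
    ultimately show ?thesis using SEC[of z] unfolding a_def b_def Q_def by simp
  qed
  define w where "w = - a * z"
  define P where "P = qpow q (- \<alpha> * (\<gamma> + 1) - \<gamma> * (\<gamma> - 1) / 2)"
  define PbQ where "PbQ = qpoch_inf (b * Q) Q"
  define Pba1 where "Pba1 = qpoch_inf (b * Q / a) Q"
  have PbQ0: "PbQ \<noteq> 0" unfolding PbQ_def Q_def by (rule qpoch_inf_nz[OF q nd_mult[OF ndb]])
  have b1: "1 - b \<noteq> 0" by (rule nd_1[OF ndb])
  have sh: "qpoch_inf c Q = (1 - c) * qpoch_inf (c * Q) Q" for c unfolding Q_def by (rule qpoch_inf_shift[OF q])
  have Pb: "qpoch_inf b Q = (1 - b) * PbQ" unfolding PbQ_def by (rule sh)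
  have Pba: "qpoch_inf (b / a) Q = (1 - b / a) * Pba1" unfolding Pba1_def sh[of "b / a"] by (simp add: mult_ac)
  have Pbm: "qpoch_inf (b / Q) Q = (1 - b / Q) * (1 - b) * PbQ" unfolding sh[of "b / Q"] using Q0 Pb by simp
  have aw: "b / a * w = - (b * z)" "b * Q / a * w = - (b * Q * z)" "Q / a * w = - (Q * z)"
    unfolding w_def using a0 by (simp_all add: field_simps)
  have h0: "phiN q \<alpha> \<gamma> z 0 = ((1 - b) * PbQ) * phi11 a b q (b / a * w)"
    unfolding phiN_def aw Pb[symmetric] by (simp add: a_def b_def Q_def)
  have qg1: "qpow q (1 + \<gamma>) = b * Q" by (simp add: qpow_add q1 b_def mult.commute)
  have h1: "phiN q \<alpha> \<gamma> z 1 = PbQ * phi11 a (b * Q) q (b * Q / a * w)"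
    unfolding phiN_def aw PbQ_def by (simp add: qg1 a_def Q_def)
  have ex1: "exp ((1 - of_int 1 - \<gamma>) * L) = exp (- \<gamma> * L)" by simp
  have ex0: "exp ((1 - of_int 0 - \<gamma>) * L) = z * exp (- \<gamma> * L)"
  proof -
    have "exp ((1 - of_int 0 - \<gamma>) * L) = exp (L + (- \<gamma> * L))"
      by (rule arg_cong[where f = exp]) (simp add: algebra_simps)
    also have "\<dots> = exp L * exp (- \<gamma> * L)" by (rule exp_add)
    finally show ?thesis using assms(5) by simp
  qed
  have P1: "qpow q (- \<alpha> * (of_int 1 + \<gamma>) - (of_int 1 + \<gamma> - 1) * (of_int 1 + \<gamma> - 2) / 2) = P"
    unfolding P_def by (rule arg_cong[where f = "qpow q"]) (simp add: algebra_simps)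
  have P0: "qpow q (- \<alpha> * (of_int 0 + \<gamma>) - (of_int 0 + \<gamma> - 1) * (of_int 0 + \<gamma> - 2) / 2) = P * a * (b / Q)"
  proof -
    have "- \<alpha> * (of_int 0 + \<gamma>) - (of_int 0 + \<gamma> - 1) * (of_int 0 + \<gamma> - 2) / 2
        = (- \<alpha> * (\<gamma> + 1) - \<gamma> * (\<gamma> - 1) / 2) + \<alpha> + (\<gamma> - 1)"
      by (simp add: field_simps)
    thus ?thesis unfolding P_def by (simp add: qpow_add qpow_diff q1 a_def b_def mult.assoc)
  qed
  have g1: "psiN q \<alpha> \<gamma> L 1 = P * Pba1 / ((1 - b) * PbQ) * exp (- \<gamma> * L) * phi11 (a / b) (Q / b) q (Q / a * w)"
  proof -
    have "qpow q (of_int 1 + \<gamma> - \<alpha>) = b * Q / a" "qpow q (of_int 1 + \<gamma> - 1) = b"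
      "qpow q (\<alpha> - of_int 1 - \<gamma> + 1) = a / b" "qpow q (2 - of_int 1 - \<gamma>) = Q / b"
      by (simp_all add: qpow_add qpow_diff q1 a_def b_def mult.commute)
    thus ?thesis unfolding psiN_def P1 ex1 aw Pba1_def Pb[symmetric] using assms(5) by (simp add: Q_def)
  qed
  have g0: "psiN q \<alpha> \<gamma> L 0 = P * a * (b / Q) * ((1 - b / a) * Pba1) / ((1 - b / Q) * (1 - b) * PbQ)
      * (z * exp (- \<gamma> * L)) * phi11 (a / b * Q) (Q / b * Q) q (Q / a * w)"
  proof -
    have "qpow q (of_int 0 + \<gamma> - \<alpha>) = b / a" "qpow q (of_int 0 + \<gamma> - 1) = b / Q"
      "qpow q (\<alpha> - of_int 0 - \<gamma> + 1) = a / b * Q" "qpow q (2 - of_int 0 - \<gamma>) = Q / b * Q"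
      by (simp_all add: qpow_add qpow_diff q1 q2 a_def b_def)
    thus ?thesis unfolding psiN_def P0 ex0 aw Pba[symmetric] Pbm[symmetric] using assms(5) by (simp add: Q_def)
  qed
  have rhs: "qpow q (\<gamma> - \<alpha> + 1) = b * Q / a" "- qpow q \<alpha> * z = w"
    by (simp_all add: qpow_add qpow_diff q1 a_def b_def w_def)
  have part1: "phiN q \<alpha> \<gamma> z 0 * psiN q \<alpha> \<gamma> L 1 - phiN q \<alpha> \<gamma> z 1 * psiN q \<alpha> \<gamma> L 0
           = qpow q (- \<alpha> * (\<gamma> + 1) - \<gamma> * (\<gamma> - 1) / 2)
             * qpoch_inf (qpow q (\<gamma> - \<alpha> + 1)) (complex_of_real q)
             * qpoch_inf (- qpow q \<alpha> * z) (complex_of_real q)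
             * exp (- \<gamma> * L)"
    unfolding h0 h1 g0 g1 rhs P_def[symmetric] Q_def[symmetric] Pba1_def[symmetric]
    by (rule gen_final[OF PbQ0 bQ b1 SEC[of w, unfolded w_def], folded w_def])
  show ?thesis using part1 part2 by blast
qed

end
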